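(* Let $U$ be a subgroup of $G^*$. Then: (i) the matching mechanism $C^U$ is $U$-symmetric; (ii) if $F$ is a resolute and $U$-symmetric matching mechanism, then $F(p)\subseteq C^U(p)$ for every $p\in\mathcal{P}$.
   Context: Fix $n\ge 2$, $W=\{1,\dots,n\}$, $M=\{n+1,\dots,2n\}$, $I=W\cup M$. Permutations compose right-to-left. A preference profile is a function $p$ on $I$ assigning to each $x\in W$ a linear order $p(x)$ on $M$ and to each $y\in M$ a linear order $p(y)$ on $W$; $\mathcal{P}$ is the set of preference profiles. A matching is a permutation $\mu$ of $I$ with $\mu(W)=M$, $\mu(M)=W$, $\mu(\mu(z))=z$ for all $z$; $\mathcal{M}$ is the set of matchings. $G^*=\{\varphi\in\mathrm{Sym}(I):\{\varphi(W),\varphi(M)\}=\{W,M\}\}$. For a linear order $R$ on $X\subseteq I$ and $\varphi\in\mathrm{Sym}(I)$, $\varphi R$ is the relation on $\varphi(X)$ with $(a,b)\in\varphi R$ iff $(\varphi^{-1}(a),\varphi^{-1}(b))\in R$. For $p\in\mathcal{P}$, $\varphi\in G^*$, $p^\varphi(z)=\varphi\,p(\varphi^{-1}(z))$. For a permutation $\mu$, $\mu^\varphi=\varphi\mu\varphi^{-1}$; $S^\varphi=\{\mu^\varphi:\mu\in S\}$. A matching mechanism is a correspondence $F$ from $\mathcal{P}$ to $\mathcal{M}$; resolute if $|F(p)|=1$ for all $p$; $U$-symmetric if $F(p^\varphi)=F(p)^\varphi$ for all $p$ and $\varphi\in U$. For $U\le G^*$ and $p\in\mathcal{P}$, $\mathrm{Stab}_U(p)=\{\varphi\in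 U:p^\varphi=p\}$, and $C^U$ is the matching mechanism $C^U(p)=\{\mu\in\mathcal{M}:\mu^\varphi=\mu\text{ for all }\varphi\in\mathrm{Stab}_U(p)\}$. *)

theory Defs
  imports "HOL-Combinatorics.Permutations"
begin

(* Agents: W = {1..n} (women), M = {n+1..2n} (men), I = W \<union> M. *)
definition Wset :: "nat \<Rightarrow> nat set" where "Wset n = {1..n}"
definition Mset :: "nat \<Rightarrow> nat set" where "Mset n = {n+1..2*n}"
definition Iset :: "nat \<Rightarrow> nat set" where "Iset n = Wset n \<union> Mset n"

(* preference profiles; p z = {} for z outside I (so profiles are determined by their values on I) *)
definition profiles :: "nat \<Rightarrow> (nat \<Rightarrow> (nat \<times> nat) set) set" where
  "profiles n = {p. (\<forall>x\<in>Wset n. linear_order_on (Mset n) (p x))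
                  \<and> (\<forall>y\<in>Mset n. linear_order_on (Wset n) (p y))
                  \<and> (\<forall>z. z \<notin> Iset n \<longrightarrow> p z = {})}"

definition matchings :: "nat \<Rightarrow> (nat \<Rightarrow> nat) set" where
  "matchings n = {\<mu>. \<mu> permutes Iset n \<and> \<mu> ` Wset n = Mset n \<and> \<mu> ` Mset n = Wset n
                    \<and> (\<forall>z. \<mu> (\<mu> z) = z)}"

definition Gstar :: "nat \<Rightarrow> (nat \<Rightarrow> nat) set" where
  "Gstar n = {\<phi>. \<phi> permutes Iset n \<and> {\<phi> ` Wset n, \<phi> ` Mset n} = {Wset n, Mset n}}"

definition perm_subgroup :: "('a \<Rightarrow> 'a) set \<Rightarrow> ('a \<Rightarrow> 'a) set \<Rightarrow> bool" where
  "perm_subgroup U G \<longleftrightarrow> U \<subseteq> G \<and> id \<in> U \<and> (\<forall>a\<in>U. \<forall>b\<in>U. a \<circ> b \<in> U)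
                          \<and> (\<forall>a\<in>U. inv a \<in> U)"

definition rel_act :: "(nat \<Rightarrow> nat) \<Rightarrow> (nat \<times> nat) set \<Rightarrow> (nat \<times> nat) set" where
  "rel_act \<phi> R = {(a, b). (inv \<phi> a, inv \<phi> b) \<in> R}"

definition prof_act :: "(nat \<Rightarrow> (nat \<times> nat) set) \<Rightarrow> (nat \<Rightarrow> nat) \<Rightarrow> (nat \<Rightarrow> (nat \<times> nat) set)" where
  "prof_act p \<phi> = (\<lambda>z. rel_act \<phi> (p (inv \<phi> z)))"

definition conj_perm :: "(nat \<Rightarrow> nat) \<Rightarrow> (nat \<Rightarrow> nat) \<Rightarrow> (nat \<Rightarrow> nat)" where
  "conj_perm \<mu> \<phi> = \<phi> \<circ> \<mu> \<circ> inv \<phi>"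

definition matching_mechanism :: "nat \<Rightarrow> ((nat \<Rightarrow> (nat \<times> nat) set) \<Rightarrow> (nat \<Rightarrow> nat) set) \<Rightarrow> bool" where
  "matching_mechanism n F \<longleftrightarrow> (\<forall>p\<in>profiles n. F p \<subseteq> matchings n)"

definition resolute :: "nat \<Rightarrow> ((nat \<Rightarrow> (nat \<times> nat) set) \<Rightarrow> (nat \<Rightarrow> nat) set) \<Rightarrow> bool" where
  "resolute n F \<longleftrightarrow> (\<forall>p\<in>profiles n. card (F p) = 1)"

definition symmetric_wrt :: "nat \<Rightarrow> (nat \<Rightarrow> nat) set \<Rightarrow> ((nat \<Rightarrow> (nat \<times> nat) set) \<Rightarrow> (nat \<Rightarrow> nat) set) \<Rightarrow> bool" where
  "symmetric_wrt n U F \<longleftrightarrow> (\<forall>p\<in>profiles n. \<forall>\<phi>\<in>U. F (prof_act p \<phi>) = (\<lambda>\<mu>. conj_perm \<mu> \<phi>) ` F p)"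

definition Stab :: "(nat \<Rightarrow> nat) set \<Rightarrow> (nat \<Rightarrow> (nat \<times> nat) set) \<Rightarrow> (nat \<Rightarrow> nat) set" where
  "Stab U p = {\<phi>\<in>U. prof_act p \<phi> = p}"

definition CU :: "nat \<Rightarrow> (nat \<Rightarrow> nat) set \<Rightarrow> (nat \<Rightarrow> (nat \<times> nat) set) \<Rightarrow> (nat \<Rightarrow> nat) set" where
  "CU n U p = {\<mu>\<in>matchings n. \<forall>\<phi>\<in>Stab U p. conj_perm \<mu> \<phi> = \<mu>}"

end

theory Submission
  imports Defs
begin

lemma Gstar_bij: "\<phi> \<in> Gstar n \<Longrightarrow> bij \<phi>"
  unfolding Gstar_def using permutes_bij by blast

lemma bij_ff[simp]: "bij f \<Longrightarrow> f (inv f x) = x"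
  by (meson bij_inv_eq_iff)
lemma bij_iff[simp]: "bij f \<Longrightarrow> inv f (f x) = x"
  by (simp add: bij_is_inj)

lemma rel_act_comp: "bij a \<Longrightarrow> bij b \<Longrightarrow> rel_act b (rel_act a R) = rel_act (b \<circ> a) R"
  unfolding rel_act_def by (simp add: o_inv_distrib)

lemma prof_act_comp: "bij a \<Longrightarrow> bij b \<Longrightarrow> prof_act (prof_act q a) b = prof_act q (b \<circ> a)"
  unfolding prof_act_def by (rule ext) (simp add: rel_act_comp o_inv_distrib)

lemma prof_act_id: "prof_act q id = q"
  unfolding prof_act_def rel_act_def by (simp add: inv_id)

lemma conj_iff: "bij \<phi> \<Longrightarrow> conj_perm \<mu> \<phi> = \<mu> \<longleftrightarrow> (\<forall>x. \<phi> (\<mu> x) = \<mu> (\<phi> x))"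
proof
  assume b: "bij \<phi>" and c: "conj_perm \<mu> \<phi> = \<mu>"
  show "\<forall>x. \<phi> (\<mu> x) = \<mu> (\<phi> x)"
  proof
    fix x
    have "conj_perm \<mu> \<phi> (\<phi> x) = \<mu> (\<phi> x)" using c by simp
    then show "\<phi> (\<mu> x) = \<mu> (\<phi> x)" using b by (simp add: conj_perm_def)
  qed
next
  assume b: "bij \<phi>" and c: "\<forall>x. \<phi> (\<mu> x) = \<mu> (\<phi> x)"
  show "conj_perm \<mu> \<phi> = \<mu>"
  proof
    fix x
    have "\<phi> (\<mu> (inv \<phi> x)) = \<mu> (\<phi> (inv \<phi> x))" using c by blast
    then show "conj_perm \<mu> \<phi> x = \<mu> x" using b by (simp add: conj_perm_def)
  qed
qed

lemma conj_matching:
  assumes "\<phi> \<in> Gstar n" "\<mu> \<in> matchings n"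
  shows "conj_perm \<mu> \<phi> \<in> matchings n"
proof -
  have b: "bij \<phi>" using assms(1) Gstar_bij by blast
  have pp: "\<phi> permutes Iset n" and G: "{\<phi> ` Wset n, \<phi> ` Mset n} = {Wset n, Mset n}"
    using assms(1) unfolding Gstar_def by auto
  have mp: "\<mu> permutes Iset n" and mW: "\<mu> ` Wset n = Mset n" and mM: "\<mu> ` Mset n = Wset n"
    and inv: "\<forall>z. \<mu> (\<mu> z) = z"
    using assms(2) unfolding matchings_def by auto
  have perm: "conj_perm \<mu> \<phi> permutes Iset n"
    unfolding conj_perm_def using pp mp permutes_compose permutes_inv by blast
  have imginv: "inv \<phi> ` (\<phi> ` A) = A" for A using b by (simp add: image_comp bij_is_inj)
  have img: "conj_perm \<mu> \<phi> ` A = \<phi> ` (\<mu> ` (inv \<phi> ` A))" for A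
    unfolding conj_perm_def by (simp add: image_comp)
  have WM: "conj_perm \<mu> \<phi> ` Wset n = Mset n \<and> conj_perm \<mu> \<phi> ` Mset n = Wset n"
  proof (cases "\<phi> ` Wset n = Wset n")
    case True
    then have "\<phi> ` Mset n = Mset n" using G by (metis doubleton_eq_iff)
    then show ?thesis using True img imginv mW mM by metis
  next
    case False
    then have a: "\<phi> ` Wset n = Mset n" "\<phi> ` Mset n = Wset n" using G by (metis doubleton_eq_iff)+
    then show ?thesis using img imginv mW mM by metis
  qed
  have "\<forall>z. conj_perm \<mu> \<phi> (conj_perm \<mu> \<phi> z) = z"
    using b inv by (simp add: conj_perm_def)
  then show ?thesis using perm WM unfolding matchings_def by blast
qed

theorem proposition3:
  fixes n :: nat and U :: "(nat \<Rightarrow> nat) set"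
  assumes "n \<ge> 2" and "perm_subgroup U (Gstar n)"
  shows "(matching_mechanism n (CU n U) \<and> symmetric_wrt n U (CU n U))
       \<and> (\<forall>F. matching_mechanism n F \<and> resolute n F \<and> symmetric_wrt n U F
              \<longrightarrow> (\<forall>p\<in>profiles n. F p \<subseteq> CU n U p))"
proof -
  have UG: "U \<subseteq> Gstar n" and Ucomp: "\<And>a b. a \<in> U \<Longrightarrow> b \<in> U \<Longrightarrow> a \<circ> b \<in> U"
    and Uinv: "\<And>a. a \<in> U \<Longrightarrow> inv a \<in> U"
    using assms(2) unfolding perm_subgroup_def by auto
  have Ub: "\<And>a. a \<in> U \<Longrightarrow> bij a" using UG Gstar_bij by blast
  have mm: "matching_mechanism n (CU n U)"
    unfolding matching_mechanism_def CU_def by auto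
  have key: "conj_perm \<mu> \<phi> \<in> CU n U (prof_act p \<phi>)" if \<phi>: "\<phi> \<in> U" and \<mu>: "\<mu> \<in> CU n U p" for \<phi> \<mu> p
  proof -
    have b: "bij \<phi>" using Ub \<phi> by blast
    have "conj_perm \<mu> \<phi> \<in> matchings n" using conj_matching \<phi> \<mu> UG unfolding CU_def by blast
    moreover have "conj_perm (conj_perm \<mu> \<phi>) \<psi> = conj_perm \<mu> \<phi>" if \<psi>: "\<psi> \<in> Stab U (prof_act p \<phi>)" for \<psi>
    proof -
      have \<psi>U: "\<psi> \<in> U" and pe: "prof_act (prof_act p \<phi>) \<psi> = prof_act p \<phi>" using \<psi> unfolding Stab_def by auto
      have b\<psi>: "bij \<psi>" using Ub \<psi>U by blast
      define \<sigma> where "\<sigma> = inv \<phi> \<circ> (\<psi> \<circ> \<phi>)"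
      have \<sigma>U: "\<sigma> \<in> U" unfolding \<sigma>_def using Ucomp Uinv \<phi> \<psi>U by blast
      have bi: "bij (inv \<phi>)" using b bij_imp_bij_inv by blast
      have "prof_act p \<sigma> = prof_act (prof_act (prof_act p \<phi>) \<psi>) (inv \<phi>)"
        unfolding \<sigma>_def using b b\<psi> bi by (simp add: prof_act_comp bij_comp)
      also have "\<dots> = prof_act p (inv \<phi> \<circ> \<phi>)" using pe b bi by (simp add: prof_act_comp)
      also have "\<dots> = p" using b by (simp add: bij_is_inj prof_act_id)
      finally have "\<sigma> \<in> Stab U p" using \<sigma>U unfolding Stab_def by blast
      then have "conj_perm \<mu> \<sigma> = \<mu>" using \<mu> unfolding CU_def by blast
      then have c: "\<forall>x. \<sigma> (\<mu> x) = \<mu> (\<sigma> x)" using conj_iff Ub \<sigma>U by blast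
      have "\<psi> (conj_perm \<mu> \<phi> x) = conj_perm \<mu> \<phi> (\<psi> x)" for x
      proof -
        have "inv \<phi> (\<psi> (\<phi> (\<mu> (inv \<phi> x)))) = \<mu> (inv \<phi> (\<psi> x))"
          using c[rule_format, of "inv \<phi> x"] b unfolding \<sigma>_def by simp
        then have "\<phi> (inv \<phi> (\<psi> (\<phi> (\<mu> (inv \<phi> x))))) = \<phi> (\<mu> (inv \<phi> (\<psi> x)))" by simp
        then show ?thesis using b by (simp add: conj_perm_def)
      qed
      then show ?thesis using conj_iff b\<psi> by blast
    qed
    ultimately show ?thesis unfolding CU_def by blast
  qed
  have sym: "symmetric_wrt n U (CU n U)"
    unfolding symmetric_wrt_def
  proof (intro ballI)
    fix p \<phi> assume "p \<in> profiles n" and \<phi>: "\<phi> \<in> U"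
    have b: "bij \<phi>" using Ub \<phi> by blast
    show "CU n U (prof_act p \<phi>) = (\<lambda>\<mu>. conj_perm \<mu> \<phi>) ` CU n U p"
    proof
      show "(\<lambda>\<mu>. conj_perm \<mu> \<phi>) ` CU n U p \<subseteq> CU n U (prof_act p \<phi>)" using key \<phi> by blast
    next
      show "CU n U (prof_act p \<phi>) \<subseteq> (\<lambda>\<mu>. conj_perm \<mu> \<phi>) ` CU n U p"
      proof
        fix \<mu> assume \<mu>: "\<mu> \<in> CU n U (prof_act p \<phi>)"
        have bi: "bij (inv \<phi>)" using b bij_imp_bij_inv by blast
        have "conj_perm \<mu> (inv \<phi>) \<in> CU n U (prof_act (prof_act p \<phi>) (inv \<phi>))"
          using key Uinv \<phi> \<mu> by blast
        moreover have "prof_act (prof_act p \<phi>) (inv \<phi>) = p"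
          using b bi by (simp add: prof_act_comp bij_is_inj prof_act_id)
        moreover have "conj_perm (conj_perm \<mu> (inv \<phi>)) \<phi> = \<mu>"
          using b bi by (auto simp: conj_perm_def inv_inv_eq)
        ultimately show "\<mu> \<in> (\<lambda>\<mu>. conj_perm \<mu> \<phi>) ` CU n U p" by (metis image_eqI)
      qed
    qed
  qed
  have part2: "F p \<subseteq> CU n U p"
    if F: "matching_mechanism n F" "resolute n F" "symmetric_wrt n U F" and p: "p \<in> profiles n" for F p
  proof -
    obtain \<mu> where Fp: "F p = {\<mu>}" using F(2) p unfolding resolute_def by (metis card_1_singletonE)
    have "\<mu> \<in> matchings n" using F(1) p Fp unfolding matching_mechanism_def by blast
    moreover have "conj_perm \<mu> \<phi> = \<mu>" if "\<phi> \<in> Stab U p" for \<phi>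
    proof -
      have "\<phi> \<in> U" "prof_act p \<phi> = p" using that unfolding Stab_def by auto
      then have "F p = (\<lambda>\<mu>. conj_perm \<mu> \<phi>) ` F p" using F(3) p unfolding symmetric_wrt_def by metis
      then show ?thesis using Fp by simp
    qed
    ultimately show ?thesis using Fp unfolding CU_def by auto
  qed
  show ?thesis using mm sym part2 by blast
qed

end
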